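(* Let $\mathbb{C}=(\mathbf{C},0,\mathbf{D},\mathcal{R})$ be a reactive system with redex RPOs, let $O$ be a set of contextual barbs, and let $L$ be a set of labels (arrows of $\mathbf{C}$). If $L$ is $O$-capturing and every label in $L$ is stable under barbed saturated bisimilarity $\sim^{BS}$, then $\sim^{BS}$ coincides with $L$-bisimilarity $\sim^{L}$.
   Context: A reactive system consists of a category $\mathbf{C}$, a distinguished object $0$, a composition-reflecting subcategory $\mathbf{D}$ of reactive contexts, and a set $\mathcal{R}\subseteq\bigcup_I\mathbf{C}(0,I)\times\mathbf{C}(0,I)$ of reduction rules. Terms are arrows with domain $0$; $C[P]$ denotes $C[-]\circ P$. Reduction: $P\rightsquigarrow Q$ iff $P=d\circ l$, $Q=d\circ r$ for some $\langle l,r\rangle\in\mathcal{R}$, $d\in\mathbf{D}$. For a commuting square $c_1\circ a_1=c_2\circ a_2$ with $a_1:K\to I_2$, $a_2:K\to I_3$, $c_1:I_2\to I_4$, $c_2:I_3\to I_4$, a candidate is $\langle I_5,e,f,g\rangle$ with $e\circ a_1=f\circ a_2$, $g\circ e=c_1$, $g\circ f=c_2$; an RPO is a candidate through which every other candidate $\langle I_6,e',f',g'\rangle$ factors via a unique $h:I_5\to I_6$ ($h\circ e=e'$, $h\circ f=f'$, $g'\circ h=g$); the square is an IPO if $\langle I_4,c_1,c_2,\mathrm{id}\rangle$ is an RPO. A redex square is a commuting square $C[-]\circ P=d\circ l$ with $\langle l,r\rangle\in\mathcal{R}$, $d\in\mathbf{D}$; the system has redex RPOs if every redex square has an RPO.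 IPO transitions: $P\xrightarrow{C[-]}_I d\circ r$ if $d\in\mathbf{D}$, $\langle l,r\rangle\in\mathcal{R}$ and $C[-]\circ P=d\circ l$ is an IPO. $L$-bisimulation: a symmetric relation $\mathcal{R}'$ such that if $P\,\mathcal{R}'\,Q$ and $P\xrightarrow{C[-]}_I P'$ then, if $C[-]\in L$, $Q\xrightarrow{C[-]}_I Q'$ with $P'\,\mathcal{R}'\,Q'$, and otherwise $C[Q]\rightsquigarrow Q'$ with $P'\,\mathcal{R}'\,Q'$; $\sim^L$ is the largest one. Barbs are predicates on terms; $P\downarrow_o$ means $P$ satisfies $o\in O$. Barbed saturated bisimilarity $\sim^{BS}$ is the largest symmetric relation $\mathcal{R}'$ such that if $P\,\mathcal{R}'\,Q$ then for all arrows $C[-]$ composable with $P$: $C[P]\downarrow_o$ implies $C[Q]\downarrow_o$, and $C[P]\rightsquigarrow P'$ implies $C[Q]\rightsquigarrow Q'$ with $P'\,\mathcal{R}'\,Q'$. A barb $o$ is contextual if whenever ($P\downarrow_o$ implies $Q\downarrow_o$) then for all $C[-]$, $C[P]\downarrow_o$ implies $C[Q]\downarrow_o$. $L$ is $O$-capturing if for each $o\in O$ there is $C[-]\in L$ such that for every term $P$, $P\downarrow_o$ iff $P\xrightarrow{C[-]}_I P'$ for some $P'$. A binary predicate $\mathcal{P}(X,Y)$ on terms is stable under a relation $\mathcal{R}'$ if whenever $P\,\mathcal{R}'\,Q$ and $\mathcal{P}(P,P')$ there is $Q'$ with $\mathcal{P}(Q,Q')$ and $P'\,\mathcal{R}'\,Q'$;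 a label $C[-]$ is stable under $\mathcal{R}'$ if the predicate $X\xrightarrow{C[-]}_I Y$ is. *)

theory Defs
  imports Main
begin

text \<open>A category is given by a set of objects, a set of arrows, domain and codomain
maps, a composition operation (\<open>ccomp S g f\<close> is \<open>g \<circ> f\<close>, meaningful when
\<open>ccod S f = cdom S g\<close>), and identities.\<close>

record ('o, 'a) rsys =
  cobj  :: "'o set"
  carr  :: "'a set"
  cdom  :: "'a \<Rightarrow> 'o"
  ccod  :: "'a \<Rightarrow> 'o"
  ccomp :: "'a \<Rightarrow> 'a \<Rightarrow> 'a"
  cid   :: "'o \<Rightarrow> 'a"
  zero  :: "'o"
  rctx  :: "'a set"
  rules :: "('a \<times> 'a) set"

definition is_category :: "('o, 'a, 'x) rsys_scheme \<Rightarrow> bool" where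
  "is_category S \<longleftrightarrow>
     (\<forall>f\<in>carr S. cdom S f \<in> cobj S \<and> ccod S f \<in> cobj S) \<and>
     (\<forall>x\<in>cobj S. cid S x \<in> carr S \<and> cdom S (cid S x) = x \<and> ccod S (cid S x) = x) \<and>
     (\<forall>f\<in>carr S. \<forall>g\<in>carr S. ccod S f = cdom S g \<longrightarrow>
        ccomp S g f \<in> carr S \<and> cdom S (ccomp S g f) = cdom S f \<and> ccod S (ccomp S g f) = ccod S g) \<and>
     (\<forall>f\<in>carr S. \<forall>g\<in>carr S. \<forall>h\<in>carr S. ccod S f = cdom S g \<longrightarrow> ccod S g = cdom S h \<longrightarrow>
        ccomp S h (ccomp S g f) = ccomp S (ccomp S h g) f) \<and>
     (\<forall>f\<in>carr S. ccomp S (cid S (ccod S f)) f = f \<and> ccomp S f (cid S (cdom S f)) = f)"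

definition is_subcategory :: "('o, 'a, 'x) rsys_scheme \<Rightarrow> 'a set \<Rightarrow> bool" where
  "is_subcategory S D \<longleftrightarrow> D \<subseteq> carr S \<and>
     (\<forall>d\<in>D. cid S (cdom S d) \<in> D \<and> cid S (ccod S d) \<in> D) \<and>
     (\<forall>d\<in>D. \<forall>e\<in>D. ccod S d = cdom S e \<longrightarrow> ccomp S e d \<in> D)"

definition composition_reflecting :: "('o, 'a, 'x) rsys_scheme \<Rightarrow> 'a set \<Rightarrow> bool" where
  "composition_reflecting S D \<longleftrightarrow>
     (\<forall>d\<in>carr S. \<forall>e\<in>carr S. ccod S d = cdom S e \<longrightarrow> ccomp S e d \<in> D \<longrightarrow> d \<in> D \<and> e \<in> D)"

definition is_reactive_system :: "('o, 'a, 'x) rsys_scheme \<Rightarrow> bool" where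
  "is_reactive_system S \<longleftrightarrow> is_category S \<and> zero S \<in> cobj S \<and>
     is_subcategory S (rctx S) \<and> composition_reflecting S (rctx S) \<and>
     (\<forall>(l, r)\<in>rules S. l \<in> carr S \<and> r \<in> carr S \<and> cdom S l = zero S \<and> cdom S r = zero S
        \<and> ccod S l = ccod S r)"

definition "term" :: "('o, 'a, 'x) rsys_scheme \<Rightarrow> 'a \<Rightarrow> bool" where
  "term S P \<longleftrightarrow> P \<in> carr S \<and> cdom S P = zero S"

definition composable :: "('o, 'a, 'x) rsys_scheme \<Rightarrow> 'a \<Rightarrow> 'a \<Rightarrow> bool" where
  "composable S C P \<longleftrightarrow> C \<in> carr S \<and> cdom S C = ccod S P"

definition red :: "('o, 'a, 'x) rsys_scheme \<Rightarrow> 'a \<Rightarrow> 'a \<Rightarrow> bool" where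
  "red S P Q \<longleftrightarrow> (\<exists>l r d. (l, r) \<in> rules S \<and> d \<in> rctx S \<and> cdom S d = ccod S l \<and>
      P = ccomp S d l \<and> Q = ccomp S d r)"

definition comm_square :: "('o, 'a, 'x) rsys_scheme \<Rightarrow> 'a \<Rightarrow> 'a \<Rightarrow> 'a \<Rightarrow> 'a \<Rightarrow> bool" where
  "comm_square S a1 a2 c1 c2 \<longleftrightarrow>
     a1 \<in> carr S \<and> a2 \<in> carr S \<and> c1 \<in> carr S \<and> c2 \<in> carr S \<and>
     cdom S a1 = cdom S a2 \<and> ccod S a1 = cdom S c1 \<and> ccod S a2 = cdom S c2 \<and>
     ccod S c1 = ccod S c2 \<and> ccomp S c1 a1 = ccomp S c2 a2"

text \<open>Candidate \<open>\<langle>I5, e, f, g\<rangle>\<close> for the square; \<open>I5\<close> is \<open>ccod S e\<close>.\<close>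
definition candidate :: "('o, 'a, 'x) rsys_scheme \<Rightarrow> 'a \<Rightarrow> 'a \<Rightarrow> 'a \<Rightarrow> 'a \<Rightarrow> 'a \<Rightarrow> 'a \<Rightarrow> 'a \<Rightarrow> bool" where
  "candidate S a1 a2 c1 c2 e f g \<longleftrightarrow>
     e \<in> carr S \<and> f \<in> carr S \<and> g \<in> carr S \<and>
     cdom S e = ccod S a1 \<and> cdom S f = ccod S a2 \<and> ccod S e = ccod S f \<and>
     cdom S g = ccod S e \<and> ccod S g = ccod S c1 \<and>
     ccomp S e a1 = ccomp S f a2 \<and> ccomp S g e = c1 \<and> ccomp S g f = c2"

definition is_RPO :: "('o, 'a, 'x) rsys_scheme \<Rightarrow> 'a \<Rightarrow> 'a \<Rightarrow> 'a \<Rightarrow> 'a \<Rightarrow> 'a \<Rightarrow> 'a \<Rightarrow> 'a \<Rightarrow> bool" where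
  "is_RPO S a1 a2 c1 c2 e f g \<longleftrightarrow> candidate S a1 a2 c1 c2 e f g \<and>
     (\<forall>e' f' g'. candidate S a1 a2 c1 c2 e' f' g' \<longrightarrow>
        (\<exists>!h. h \<in> carr S \<and> cdom S h = ccod S e \<and> ccod S h = ccod S e' \<and>
              ccomp S h e = e' \<and> ccomp S h f = f' \<and> ccomp S g' h = g))"

definition is_IPO :: "('o, 'a, 'x) rsys_scheme \<Rightarrow> 'a \<Rightarrow> 'a \<Rightarrow> 'a \<Rightarrow> 'a \<Rightarrow> bool" where
  "is_IPO S a1 a2 c1 c2 \<longleftrightarrow> comm_square S a1 a2 c1 c2 \<and>
     is_RPO S a1 a2 c1 c2 c1 c2 (cid S (ccod S c1))"

definition redex_square :: "('o, 'a, 'x) rsys_scheme \<Rightarrow> 'a \<Rightarrow> 'a \<Rightarrow> 'a \<Rightarrow> 'a \<Rightarrow> bool" where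
  "redex_square S P C d l \<longleftrightarrow> comm_square S P l C d \<and>
     (\<exists>r. (l, r) \<in> rules S) \<and> d \<in> rctx S"

definition has_redex_RPOs :: "('o, 'a, 'x) rsys_scheme \<Rightarrow> bool" where
  "has_redex_RPOs S \<longleftrightarrow> (\<forall>P C d l. redex_square S P C d l \<longrightarrow>
     (\<exists>e f g. is_RPO S P l C d e f g))"

definition ipo_trans :: "('o, 'a, 'x) rsys_scheme \<Rightarrow> 'a \<Rightarrow> 'a \<Rightarrow> 'a \<Rightarrow> bool" where
  "ipo_trans S P C P' \<longleftrightarrow> (\<exists>l r d. d \<in> rctx S \<and> (l, r) \<in> rules S \<and>
      is_IPO S P l C d \<and> P' = ccomp S d r)"

definition term_rel :: "('o, 'a, 'x) rsys_scheme \<Rightarrow> ('a \<Rightarrow> 'a \<Rightarrow> bool) \<Rightarrow> bool" where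
  "term_rel S R \<longleftrightarrow> (\<forall>P Q. R P Q \<longrightarrow> term S P \<and> term S Q \<and> ccod S P = ccod S Q)"

definition L_bisimulation :: "('o, 'a, 'x) rsys_scheme \<Rightarrow> 'a set \<Rightarrow> ('a \<Rightarrow> 'a \<Rightarrow> bool) \<Rightarrow> bool" where
  "L_bisimulation S L R \<longleftrightarrow> term_rel S R \<and> symp R \<and>
     (\<forall>P Q C P'. R P Q \<longrightarrow> ipo_trans S P C P' \<longrightarrow>
        (if C \<in> L then (\<exists>Q'. ipo_trans S Q C Q' \<and> R P' Q')
         else (\<exists>Q'. red S (ccomp S C Q) Q' \<and> R P' Q')))"

definition L_bisimilar :: "('o, 'a, 'x) rsys_scheme \<Rightarrow> 'a set \<Rightarrow> 'a \<Rightarrow> 'a \<Rightarrow> bool" where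
  "L_bisimilar S L P Q \<longleftrightarrow> (\<exists>R. L_bisimulation S L R \<and> R P Q)"

definition BS_bisimulation :: "('o, 'a, 'x) rsys_scheme \<Rightarrow> 'b set \<Rightarrow> ('b \<Rightarrow> 'a \<Rightarrow> bool)
    \<Rightarrow> ('a \<Rightarrow> 'a \<Rightarrow> bool) \<Rightarrow> bool" where
  "BS_bisimulation S Obs barb R \<longleftrightarrow> term_rel S R \<and> symp R \<and>
     (\<forall>P Q C. R P Q \<longrightarrow> composable S C P \<longrightarrow>
        (\<forall>ob\<in>Obs. barb ob (ccomp S C P) \<longrightarrow> barb ob (ccomp S C Q)) \<and>
        (\<forall>P'. red S (ccomp S C P) P' \<longrightarrow> (\<exists>Q'. red S (ccomp S C Q) Q' \<and> R P' Q')))"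

definition BS_bisimilar :: "('o, 'a, 'x) rsys_scheme \<Rightarrow> 'b set \<Rightarrow> ('b \<Rightarrow> 'a \<Rightarrow> bool)
    \<Rightarrow> 'a \<Rightarrow> 'a \<Rightarrow> bool" where
  "BS_bisimilar S Obs barb P Q \<longleftrightarrow> (\<exists>R. BS_bisimulation S Obs barb R \<and> R P Q)"

definition contextual_barb :: "('o, 'a, 'x) rsys_scheme \<Rightarrow> ('b \<Rightarrow> 'a \<Rightarrow> bool) \<Rightarrow> 'b \<Rightarrow> bool" where
  "contextual_barb S barb ob \<longleftrightarrow>
     (\<forall>P Q. term S P \<longrightarrow> term S Q \<longrightarrow> ccod S P = ccod S Q \<longrightarrow>
        (barb ob P \<longrightarrow> barb ob Q) \<longrightarrow>
        (\<forall>C. composable S C P \<longrightarrow> barb ob (ccomp S C P) \<longrightarrow> barb ob (ccomp S C Q)))"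

definition O_capturing :: "('o, 'a, 'x) rsys_scheme \<Rightarrow> 'b set \<Rightarrow> ('b \<Rightarrow> 'a \<Rightarrow> bool) \<Rightarrow> 'a set \<Rightarrow> bool" where
  "O_capturing S Obs barb L \<longleftrightarrow>
     (\<forall>ob\<in>Obs. \<exists>C\<in>L. \<forall>P. term S P \<longrightarrow> (barb ob P \<longleftrightarrow> (\<exists>P'. ipo_trans S P C P')))"

definition stable_pred :: "('a \<Rightarrow> 'a \<Rightarrow> bool) \<Rightarrow> ('a \<Rightarrow> 'a \<Rightarrow> bool) \<Rightarrow> bool" where
  "stable_pred Pr R \<longleftrightarrow> (\<forall>P Q P'. R P Q \<longrightarrow> Pr P P' \<longrightarrow> (\<exists>Q'. Pr Q Q' \<and> R P' Q'))"

definition stable_label :: "('o, 'a, 'x) rsys_scheme \<Rightarrow> 'a \<Rightarrow> ('a \<Rightarrow> 'a \<Rightarrow> bool) \<Rightarrow> bool" where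
  "stable_label S C R \<longleftrightarrow> stable_pred (\<lambda>X Y. ipo_trans S X C Y) R"

end

theory Submission
  imports Defs
begin

lemma cat_comp:
  assumes "is_category S" "f \<in> carr S" "g \<in> carr S" "ccod S f = cdom S g"
  shows "ccomp S g f \<in> carr S \<and> cdom S (ccomp S g f) = cdom S f \<and> ccod S (ccomp S g f) = ccod S g"
  using assms unfolding is_category_def by blast

lemma cat_assoc:
  assumes "is_category S" "f \<in> carr S" "g \<in> carr S" "h \<in> carr S" "ccod S f = cdom S g" "ccod S g = cdom S h"
  shows "ccomp S h (ccomp S g f) = ccomp S (ccomp S h g) f"
  using assms unfolding is_category_def by blast

lemma cat_obj:
  assumes "is_category S" "f \<in> carr S"
  shows "cdom S f \<in> cobj S \<and> ccod S f \<in> cobj S"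
  using assms unfolding is_category_def by blast

lemma cat_id:
  assumes "is_category S" "x \<in> cobj S"
  shows "cid S x \<in> carr S \<and> cdom S (cid S x) = x \<and> ccod S (cid S x) = x"
  using assms unfolding is_category_def by blast

lemma cat_idl:
  assumes "is_category S" "f \<in> carr S"
  shows "ccomp S (cid S (ccod S f)) f = f \<and> ccomp S f (cid S (cdom S f)) = f"
  using assms unfolding is_category_def by blast

lemma RPO_IPO:
  assumes cat: "is_category S" and sq: "comm_square S a1 a2 c1 c2"
    and rpo: "is_RPO S a1 a2 c1 c2 e f g"
  shows "is_IPO S a1 a2 e f"
proof -
  have cand: "candidate S a1 a2 c1 c2 e f g" using rpo unfolding is_RPO_def by blast
  hence ce: "e \<in> carr S" "f \<in> carr S" "g \<in> carr S" "cdom S e = ccod S a1" "cdom S f = ccod S a2"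
    "ccod S e = ccod S f" "cdom S g = ccod S e" "ccod S g = ccod S c1"
    "ccomp S e a1 = ccomp S f a2" "ccomp S g e = c1" "ccomp S g f = c2"
    unfolding candidate_def by auto
  have sqf: "a1 \<in> carr S" "a2 \<in> carr S" "c1 \<in> carr S" "c2 \<in> carr S" "cdom S a1 = cdom S a2"
    using sq unfolding comm_square_def by auto
  have U: "\<And>e' f' g'. candidate S a1 a2 c1 c2 e' f' g' \<Longrightarrow>
        (\<exists>!h. h \<in> carr S \<and> cdom S h = ccod S e \<and> ccod S h = ccod S e' \<and>
              ccomp S h e = e' \<and> ccomp S h f = f' \<and> ccomp S g' h = g)"
    using rpo unfolding is_RPO_def by blast
  define i5 where "i5 = cid S (ccod S e)"
  have i5: "i5 \<in> carr S" "cdom S i5 = ccod S e" "ccod S i5 = ccod S e"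
    using cat_id[OF cat] cat_obj[OF cat ce(1)] unfolding i5_def by auto
  have i5e: "ccomp S i5 e = e" using cat_idl[OF cat ce(1)] unfolding i5_def by auto
  have i5f: "ccomp S i5 f = f" using cat_idl[OF cat ce(2)] ce(6) unfolding i5_def by auto
  have gi5: "ccomp S g i5 = g" using cat_idl[OF cat ce(3)] ce(7) unfolding i5_def by auto
  have csq: "comm_square S a1 a2 e f"
    unfolding comm_square_def using ce sqf by auto
  have cand2: "candidate S a1 a2 e f e f i5"
    unfolding candidate_def using ce i5 i5e i5f by auto
  have univ: "\<exists>!h. h \<in> carr S \<and> cdom S h = ccod S e \<and> ccod S h = ccod S e' \<and>
              ccomp S h e = e' \<and> ccomp S h f = f' \<and> ccomp S g' h = i5"
    if c': "candidate S a1 a2 e f e' f' g'" for e' f' g'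
  proof -
    from c' have cf: "e' \<in> carr S" "f' \<in> carr S" "g' \<in> carr S" "cdom S e' = ccod S a1" "cdom S f' = ccod S a2"
      "ccod S e' = ccod S f'" "cdom S g' = ccod S e'" "ccod S g' = ccod S e"
      "ccomp S e' a1 = ccomp S f' a2" "ccomp S g' e' = e" "ccomp S g' f' = f"
      unfolding candidate_def by auto
    define gg where "gg = ccomp S g g'"
    have gg: "gg \<in> carr S" "cdom S gg = ccod S e'" "ccod S gg = ccod S c1"
      using cat_comp[OF cat cf(3) ce(3)] cf ce unfolding gg_def by auto
    have gge: "ccomp S gg e' = c1"
      using cat_assoc[OF cat cf(1) cf(3) ce(3)] cf ce unfolding gg_def by simp
    have ggf: "ccomp S gg f' = c2"
      using cat_assoc[OF cat cf(2) cf(3) ce(3)] cf ce unfolding gg_def by simp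
    have cand3: "candidate S a1 a2 c1 c2 e' f' gg"
      unfolding candidate_def using cf gg gge ggf by auto
    from U[OF cand3] obtain h where h: "h \<in> carr S" "cdom S h = ccod S e" "ccod S h = ccod S e'"
      "ccomp S h e = e'" "ccomp S h f = f'" "ccomp S gg h = g" by blast
    define k where "k = ccomp S g' h"
    have k: "k \<in> carr S" "cdom S k = ccod S e" "ccod S k = ccod S e"
      using cat_comp[OF cat h(1) cf(3)] h cf unfolding k_def by auto
    have ke: "ccomp S k e = e"
      using cat_assoc[OF cat ce(1) h(1) cf(3)] h cf unfolding k_def by simp
    have kf: "ccomp S k f = f"
      using cat_assoc[OF cat ce(2) h(1) cf(3)] h cf ce unfolding k_def by simp
    have gk: "ccomp S g k = g"
      using cat_assoc[OF cat h(1) cf(3) ce(3)] h cf ce unfolding k_def gg_def by simp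
    have Uself: "\<exists>!h. h \<in> carr S \<and> cdom S h = ccod S e \<and> ccod S h = ccod S e \<and>
              ccomp S h e = e \<and> ccomp S h f = f \<and> ccomp S g h = g" using U[OF cand] .
    have "k = i5" using Uself k ke kf gk i5 i5e i5f gi5 by blast
    show ?thesis
    proof (rule ex1I[of _ h])
      show "h \<in> carr S \<and> cdom S h = ccod S e \<and> ccod S h = ccod S e' \<and>
              ccomp S h e = e' \<and> ccomp S h f = f' \<and> ccomp S g' h = i5"
        using h \<open>k = i5\<close> unfolding k_def by auto
    next
      fix h2 assume h2: "h2 \<in> carr S \<and> cdom S h2 = ccod S e \<and> ccod S h2 = ccod S e' \<and>
              ccomp S h2 e = e' \<and> ccomp S h2 f = f' \<and> ccomp S g' h2 = i5"
      have "ccomp S gg h2 = g"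
        using cat_assoc[OF cat _ cf(3) ce(3), of h2] h2 cf ce gi5 unfolding gg_def by simp
      then show "h2 = h" using U[OF cand3] h h2 by blast
    qed
  qed
  show ?thesis unfolding is_IPO_def is_RPO_def using csq cand2 univ unfolding i5_def by blast
qed

lemma rs_facts:
  assumes "is_reactive_system S"
  shows "is_category S" "rctx S \<subseteq> carr S"
    "\<And>d e. d \<in> rctx S \<Longrightarrow> e \<in> rctx S \<Longrightarrow> ccod S d = cdom S e \<Longrightarrow> ccomp S e d \<in> rctx S"
    "\<And>d e. d \<in> carr S \<Longrightarrow> e \<in> carr S \<Longrightarrow> ccod S d = cdom S e \<Longrightarrow> ccomp S e d \<in> rctx S \<Longrightarrow> d \<in> rctx S \<and> e \<in> rctx S"
    "\<And>l r. (l, r) \<in> rules S \<Longrightarrow> l \<in> carr S \<and> r \<in> carr S \<and> cdom S l = zero S \<and> cdom S r = zero S \<and> ccod S l = ccod S r"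
  using assms unfolding is_reactive_system_def is_subcategory_def composition_reflecting_def by auto

lemma ipo_red:
  assumes rs: "is_reactive_system S" and t: "ipo_trans S P C P'"
  shows "composable S C P \<and> red S (ccomp S C P) P'"
proof -
  from t obtain l r d where d: "d \<in> rctx S" "(l, r) \<in> rules S" "is_IPO S P l C d" "P' = ccomp S d r"
    unfolding ipo_trans_def by blast
  hence sq: "comm_square S P l C d" unfolding is_IPO_def by blast
  show ?thesis using sq d unfolding composable_def red_def comm_square_def by metis
qed

lemma red_ctx:
  assumes rs: "is_reactive_system S" and r: "red S (ccomp S e Q) Q2"
    and g: "g \<in> rctx S" "cdom S g = ccod S e" and e: "e \<in> carr S" "Q \<in> carr S" "ccod S Q = cdom S e"
  shows "red S (ccomp S (ccomp S g e) Q) (ccomp S g Q2)"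
proof -
  note cat = rs_facts(1)[OF rs]
  from r obtain l r' d where d: "(l, r') \<in> rules S" "d \<in> rctx S" "cdom S d = ccod S l"
    "ccomp S e Q = ccomp S d l" "Q2 = ccomp S d r'" unfolding red_def by blast
  have lr: "l \<in> carr S" "r' \<in> carr S" "ccod S l = ccod S r'" using rs_facts(5)[OF rs d(1)] by auto
  have dc: "d \<in> carr S" "g \<in> carr S" using d(2) g(1) rs_facts(2)[OF rs] by auto
  have "ccod S d = ccod S e"
    using cat_comp[OF cat lr(1) dc(1)] cat_comp[OF cat e(2) e(1)] d e by metis
  hence cd: "ccod S d = cdom S g" using g by simp
  have gd: "ccomp S g d \<in> rctx S" using rs_facts(3)[OF rs d(2) g(1) cd] .
  have "ccomp S (ccomp S g e) Q = ccomp S g (ccomp S e Q)"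
    using cat_assoc[OF cat e(2) e(1) dc(2)] e g by simp
  also have "\<dots> = ccomp S (ccomp S g d) l"
    using cat_assoc[OF cat lr(1) dc(1) dc(2)] d cd by simp
  finally have 1: "ccomp S (ccomp S g e) Q = ccomp S (ccomp S g d) l" .
  have 2: "ccomp S g Q2 = ccomp S (ccomp S g d) r'"
    using cat_assoc[OF cat lr(2) dc(1) dc(2)] d cd lr by simp
  have 3: "cdom S (ccomp S g d) = ccod S l" using cat_comp[OF cat dc(1) dc(2) cd] d by simp
  show ?thesis unfolding red_def using 1 2 3 gd d(1) by blast
qed


lemma L_step:
  assumes rs: "is_reactive_system S" and rpos: "has_redex_RPOs S"
    and Lb: "L_bisimulation S L R0" and PQ: "R0 P Q"
    and C: "C \<in> carr S" "cdom S C = ccod S P" and rd: "red S (ccomp S C P) P'"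
  shows "\<exists>Q' g X Y. red S (ccomp S C Q) Q' \<and> P' = ccomp S g X \<and> Q' = ccomp S g Y \<and> R0 X Y
           \<and> g \<in> carr S \<and> cdom S g = ccod S X"
proof -
  note cat = rs_facts(1)[OF rs]
  have tr: "term S P" "term S Q" "ccod S P = ccod S Q" using Lb PQ unfolding L_bisimulation_def term_rel_def by auto
  have Pc: "P \<in> carr S" "cdom S P = zero S" "Q \<in> carr S" "cdom S Q = zero S" using tr unfolding term_def by auto
  from rd obtain l r d where d: "(l, r) \<in> rules S" "d \<in> rctx S" "cdom S d = ccod S l"
    "ccomp S C P = ccomp S d l" "P' = ccomp S d r" unfolding red_def by blast
  have lr: "l \<in> carr S" "r \<in> carr S" "cdom S l = zero S" "ccod S l = ccod S r" using rs_facts(5)[OF rs d(1)] by auto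
  have dc: "d \<in> carr S" using d(2) rs_facts(2)[OF rs] by auto
  have "ccod S C = ccod S d"
    using cat_comp[OF cat lr(1) dc] cat_comp[OF cat Pc(1) C(1)] d C by metis
  hence sq: "comm_square S P l C d" unfolding comm_square_def using Pc lr dc C d by auto
  hence "redex_square S P C d l" unfolding redex_square_def using d by blast
  then obtain e f g where rpo: "is_RPO S P l C d e f g" using rpos unfolding has_redex_RPOs_def by blast
  have ipo: "is_IPO S P l e f" using RPO_IPO[OF cat sq rpo] .
  have ce: "e \<in> carr S" "f \<in> carr S" "g \<in> carr S" "cdom S e = ccod S P" "cdom S f = ccod S l"
    "ccod S e = ccod S f" "cdom S g = ccod S e" "ccomp S g e = C" "ccomp S g f = d"
    using rpo unfolding is_RPO_def candidate_def by auto
  have fg: "f \<in> rctx S" "g \<in> rctx S" using rs_facts(4)[OF rs ce(2) ce(3)] ce d by auto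
  have t1: "ipo_trans S P e (ccomp S f r)" unfolding ipo_trans_def using fg d ipo by blast
  have P'eq: "P' = ccomp S g (ccomp S f r)"
    using cat_assoc[OF cat lr(2) ce(2) ce(3)] lr ce d by simp
  have fr: "ccod S (ccomp S f r) = ccod S f" using cat_comp[OF cat lr(2) ce(2)] lr ce by simp
  have key: "red S (ccomp S C Q) (ccomp S g Q2)" if "red S (ccomp S e Q) Q2" for Q2
    using red_ctx[OF rs that fg(2) ce(7) ce(1) Pc(3)] ce tr by simp
  from Lb PQ t1 have "if e \<in> L then (\<exists>Q'. ipo_trans S Q e Q' \<and> R0 (ccomp S f r) Q')
         else (\<exists>Q'. red S (ccomp S e Q) Q' \<and> R0 (ccomp S f r) Q')"
    unfolding L_bisimulation_def by blast
  then obtain Q2 where "red S (ccomp S e Q) Q2" "R0 (ccomp S f r) Q2"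
    using ipo_red[OF rs] by (auto split: if_splits)
  then show ?thesis using key P'eq ce fr by metis
qed


lemma dir1:
  assumes rs: "is_reactive_system S"
    and stab: "\<forall>C\<in>L. stable_label S C (BS_bisimilar S Obs barb)"
  shows "L_bisimulation S L (BS_bisimilar S Obs barb)"
proof -
  have tr: "term_rel S (BS_bisimilar S Obs barb)"
    unfolding term_rel_def BS_bisimilar_def BS_bisimulation_def term_rel_def by blast
  have sy: "symp (BS_bisimilar S Obs barb)"
  proof (rule sympI)
    fix P Q assume "BS_bisimilar S Obs barb P Q"
    then obtain R where R: "BS_bisimulation S Obs barb R" "R P Q" unfolding BS_bisimilar_def by blast
    have "symp R" using R(1) unfolding BS_bisimulation_def by blast
    then have "R Q P" using R(2) by (rule sympD)
    then show "BS_bisimilar S Obs barb Q P" using R(1) unfolding BS_bisimilar_def by blast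
  qed
  have st: "if C \<in> L then (\<exists>Q'. ipo_trans S Q C Q' \<and> BS_bisimilar S Obs barb P' Q')
         else (\<exists>Q'. red S (ccomp S C Q) Q' \<and> BS_bisimilar S Obs barb P' Q')"
    if PQ: "BS_bisimilar S Obs barb P Q" and t: "ipo_trans S P C P'" for P Q C P'
  proof (cases "C \<in> L")
    case True
    then show ?thesis using stab PQ t unfolding stable_label_def stable_pred_def by auto
  next
    case False
    from PQ obtain R where R: "BS_bisimulation S Obs barb R" "R P Q" unfolding BS_bisimilar_def by blast
    from ipo_red[OF rs t] have "composable S C P" "red S (ccomp S C P) P'" by auto
    with R obtain Q' where "red S (ccomp S C Q) Q'" "R P' Q'" unfolding BS_bisimulation_def by blast
    then show ?thesis using False R unfolding BS_bisimilar_def by auto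
  qed
  show ?thesis unfolding L_bisimulation_def using tr sy st by blast
qed

lemma dir2:
  assumes rs: "is_reactive_system S" and rpos: "has_redex_RPOs S"
    and ctx: "\<forall>ob\<in>Obs. contextual_barb S barb ob"
    and cap: "O_capturing S Obs barb L"
  shows "BS_bisimulation S Obs barb (\<lambda>X Y. \<exists>P Q g. L_bisimilar S L P Q \<and> g \<in> carr S \<and>
           cdom S g = ccod S P \<and> X = ccomp S g P \<and> Y = ccomp S g Q)" (is "BS_bisimulation S Obs barb ?R")
proof -
  note cat = rs_facts(1)[OF rs]
  have LB: "term S P \<and> term S Q \<and> ccod S P = ccod S Q" if "L_bisimilar S L P Q" for P Q
    using that unfolding L_bisimilar_def L_bisimulation_def term_rel_def by blast
  have tr: "term_rel S ?R"
    unfolding term_rel_def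
  proof (intro allI impI)
    fix X Y assume "?R X Y"
    then obtain P Q g where h: "L_bisimilar S L P Q" "g \<in> carr S" "cdom S g = ccod S P"
      "X = ccomp S g P" "Y = ccomp S g Q" by blast
    from LB[OF h(1)] have "P \<in> carr S" "Q \<in> carr S" "cdom S P = zero S" "cdom S Q = zero S" "ccod S P = ccod S Q"
      unfolding term_def by auto
    then show "term S X \<and> term S Y \<and> ccod S X = ccod S Y"
      using cat_comp[OF cat _ h(2), of P] cat_comp[OF cat _ h(2), of Q] h unfolding term_def by auto
  qed
  have sy: "symp ?R"
  proof (rule sympI)
    fix X Y assume "?R X Y"
    then obtain P Q g where h: "L_bisimilar S L P Q" "g \<in> carr S" "cdom S g = ccod S P"
      "X = ccomp S g P" "Y = ccomp S g Q" by blast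
    obtain R1 where R1: "L_bisimulation S L R1" "R1 P Q" using h(1) unfolding L_bisimilar_def by blast
    have "symp R1" using R1(1) unfolding L_bisimulation_def by blast
    then have "R1 Q P" using R1(2) by (rule sympD)
    then have "L_bisimilar S L Q P" using R1(1) unfolding L_bisimilar_def by blast
    then show "?R Y X" using h LB[OF h(1)] by metis
  qed
  have main: "(\<forall>ob\<in>Obs. barb ob (ccomp S C X) \<longrightarrow> barb ob (ccomp S C Y)) \<and>
        (\<forall>P'. red S (ccomp S C X) P' \<longrightarrow> (\<exists>Q'. red S (ccomp S C Y) Q' \<and> ?R P' Q'))"
    if XY: "?R X Y" and cm: "composable S C X" for X Y C
  proof -
    from XY obtain P Q g where h: "L_bisimilar S L P Q" "g \<in> carr S" "cdom S g = ccod S P"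
      "X = ccomp S g P" "Y = ccomp S g Q" by blast
    from LB[OF h(1)] have pq: "P \<in> carr S" "Q \<in> carr S" "cdom S P = zero S" "cdom S Q = zero S" "ccod S P = ccod S Q"
      "term S P" "term S Q"
      unfolding term_def by auto
    from cm have C: "C \<in> carr S" "cdom S C = ccod S g"
      using cat_comp[OF cat pq(1) h(2)] h unfolding composable_def by auto
    define C' where "C' = ccomp S C g"
    have C': "C' \<in> carr S" "cdom S C' = ccod S P" using cat_comp[OF cat h(2) C(1)] C h unfolding C'_def by auto
    have eX: "ccomp S C X = ccomp S C' P" using cat_assoc[OF cat pq(1) h(2) C(1)] h C unfolding C'_def by simp
    have eY: "ccomp S C Y = ccomp S C' Q" using cat_assoc[OF cat pq(2) h(2) C(1)] h C pq unfolding C'_def by simp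
    from h(1) obtain R0 where R0: "L_bisimulation S L R0" "R0 P Q" unfolding L_bisimilar_def by blast
    have barbs: "barb ob (ccomp S C Y)" if ob: "ob \<in> Obs" "barb ob (ccomp S C X)" for ob
    proof -
      from cap ob(1) obtain Cl where Cl: "Cl \<in> L"
        "\<And>P. term S P \<Longrightarrow> barb ob P \<longleftrightarrow> (\<exists>P'. ipo_trans S P Cl P')"
        unfolding O_capturing_def by blast
      have "barb ob P \<longrightarrow> barb ob Q"
      proof
        assume "barb ob P"
        then obtain P' where "ipo_trans S P Cl P'" using Cl(2)[OF pq(6)] by blast
        with R0 Cl(1) obtain Q' where "ipo_trans S Q Cl Q'" unfolding L_bisimulation_def by fastforce
        then show "barb ob Q" using Cl(2)[OF pq(7)] by blast
      qed
      moreover have "composable S C' P" unfolding composable_def using C' by simp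
      ultimately show ?thesis using ctx ob pq eX eY unfolding contextual_barb_def by metis
    qed
    have reds: "\<exists>Q'. red S (ccomp S C Y) Q' \<and> ?R P' Q'" if rd: "red S (ccomp S C X) P'" for P'
    proof -
      from L_step[OF rs rpos R0 C' ] rd eX obtain Q' g2 X2 Y2 where
        q: "red S (ccomp S C' Q) Q'" "P' = ccomp S g2 X2" "Q' = ccomp S g2 Y2" "R0 X2 Y2"
           "g2 \<in> carr S" "cdom S g2 = ccod S X2" by metis
      have "L_bisimilar S L X2 Y2" using q(4) R0(1) unfolding L_bisimilar_def by blast
      then have "?R P' Q'" using q by blast
      moreover have "red S (ccomp S C Y) Q'" using q(1) eY by simp
      ultimately show ?thesis by blast
    qed
    show ?thesis using barbs reds by blast
  qed
  show ?thesis unfolding BS_bisimulation_def using tr sy main by blast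
qed

theorem mainTheorem2:
  fixes S :: "('o, 'a) rsys" and Obs :: "'b set" and barb :: "'b \<Rightarrow> 'a \<Rightarrow> bool" and L :: "'a set"
  assumes "is_reactive_system S"
    and "has_redex_RPOs S"
    and "\<forall>ob\<in>Obs. contextual_barb S barb ob"
    and "L \<subseteq> carr S"
    and "O_capturing S Obs barb L"
    and "\<forall>C\<in>L. stable_label S C (BS_bisimilar S Obs barb)"
  shows "BS_bisimilar S Obs barb = L_bisimilar S L"
proof (intro ext iffI)
  fix P Q
  assume "BS_bisimilar S Obs barb P Q"
  then show "L_bisimilar S L P Q" using dir1[OF assms(1) assms(6)] unfolding L_bisimilar_def by blast
next
  fix P Q
  assume PQ: "L_bisimilar S L P Q"
  note cat = rs_facts(1)[OF assms(1)]
  have "P \<in> carr S" using PQ unfolding L_bisimilar_def L_bisimulation_def term_rel_def term_def by blast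
  moreover have "Q \<in> carr S" "ccod S P = ccod S Q"
    using PQ unfolding L_bisimilar_def L_bisimulation_def term_rel_def term_def by blast+
  ultimately have i: "cid S (ccod S P) \<in> carr S" "cdom S (cid S (ccod S P)) = ccod S P"
    "ccomp S (cid S (ccod S P)) P = P" "ccomp S (cid S (ccod S P)) Q = Q"
    using cat_id[OF cat] cat_obj[OF cat] cat_idl[OF cat] by metis+
  have "(\<lambda>X Y. \<exists>P Q g. L_bisimilar S L P Q \<and> g \<in> carr S \<and>
           cdom S g = ccod S P \<and> X = ccomp S g P \<and> Y = ccomp S g Q) P Q"
    using PQ i by metis
  then show "BS_bisimilar S Obs barb P Q"
    using dir2[OF assms(1) assms(2) assms(3) assms(5)] unfolding BS_bisimilar_def by blast
qed

end
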